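(* If $G$ is a connected cubic (3-regular) graph of order $n$ with $G \not\cong K_{3,3}$, then $\gamma_{\rm gr}^t(G) \ge \frac{1}{2}n$.
   Context: $N(v)$ denotes the open neighborhood of $v$. A sequence $S=(v_1,\ldots,v_k)$ of distinct vertices of a graph $G$ without isolated vertices is a legal sequence if $N(v_i)\setminus \bigcup_{j=1}^{i-1} N(v_j)\neq\emptyset$ for every $i\in\{2,\ldots,k\}$, and a total dominating sequence if moreover $\{v_1,\ldots,v_k\}$ is a total dominating set of $G$. $\gamma_{\rm gr}^t(G)$ is the maximum length of a total dominating sequence of $G$. *)

theory Defs
  imports Main
begin

definition simple_graph :: "'a set \<Rightarrow> ('a \<Rightarrow> 'a \<Rightarrow> bool) \<Rightarrow> bool" where
  "simple_graph V E \<longleftrightarrow> finite V \<and> (\<forall>x y. E x y \<longrightarrow> x \<in> V \<and> y \<in> V)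
     \<and> (\<forall>x y. E x y \<longrightarrow> E y x) \<and> (\<forall>x. \<not> E x x)"

definition nbhd :: "'a set \<Rightarrow> ('a \<Rightarrow> 'a \<Rightarrow> bool) \<Rightarrow> 'a \<Rightarrow> 'a set" where
  "nbhd V E v = {u \<in> V. E v u}"

definition cubic :: "'a set \<Rightarrow> ('a \<Rightarrow> 'a \<Rightarrow> bool) \<Rightarrow> bool" where
  "cubic V E \<longleftrightarrow> (\<forall>v \<in> V. card (nbhd V E v) = 3)"

definition connected_graph :: "'a set \<Rightarrow> ('a \<Rightarrow> 'a \<Rightarrow> bool) \<Rightarrow> bool" where
  "connected_graph V E \<longleftrightarrow> V \<noteq> {} \<and> (\<forall>x \<in> V. \<forall>y \<in> V. E\<^sup>*\<^sup>* x y)"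

definition graph_iso :: "'a set \<Rightarrow> ('a \<Rightarrow> 'a \<Rightarrow> bool) \<Rightarrow> 'b set \<Rightarrow> ('b \<Rightarrow> 'b \<Rightarrow> bool) \<Rightarrow> bool" where
  "graph_iso V E W F \<longleftrightarrow> (\<exists>f. bij_betw f V W \<and> (\<forall>x \<in> V. \<forall>y \<in> V. E x y \<longleftrightarrow> F (f x) (f y)))"

definition K33_V :: "(bool \<times> nat) set" where
  "K33_V = UNIV \<times> {0..<3}"

definition K33_E :: "bool \<times> nat \<Rightarrow> bool \<times> nat \<Rightarrow> bool" where
  "K33_E x y \<longleftrightarrow> x \<in> K33_V \<and> y \<in> K33_V \<and> fst x \<noteq> fst y"

definition legal_seq :: "'a set \<Rightarrow> ('a \<Rightarrow> 'a \<Rightarrow> bool) \<Rightarrow> 'a list \<Rightarrow> bool" where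
  "legal_seq V E S \<longleftrightarrow> distinct S \<and> set S \<subseteq> V \<and>
     (\<forall>i. 1 \<le> i \<and> i < length S \<longrightarrow>
        nbhd V E (S ! i) - (\<Union>j<i. nbhd V E (S ! j)) \<noteq> {})"

definition total_dominating_set :: "'a set \<Rightarrow> ('a \<Rightarrow> 'a \<Rightarrow> bool) \<Rightarrow> 'a set \<Rightarrow> bool" where
  "total_dominating_set V E D \<longleftrightarrow> D \<subseteq> V \<and> (\<forall>v \<in> V. \<exists>u \<in> D. E v u)"

definition total_dom_seq :: "'a set \<Rightarrow> ('a \<Rightarrow> 'a \<Rightarrow> bool) \<Rightarrow> 'a list \<Rightarrow> bool" where
  "total_dom_seq V E S \<longleftrightarrow> legal_seq V E S \<and> total_dominating_set V E (set S)"

definition gamma_gr_t :: "'a set \<Rightarrow> ('a \<Rightarrow> 'a \<Rightarrow> bool) \<Rightarrow> nat" where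
  "gamma_gr_t V E = Max (length ` {S. total_dom_seq V E S})"

end

theory Submission
  imports Defs
begin

locale cg =
  fixes V :: "'a set" and E :: "'a \<Rightarrow> 'a \<Rightarrow> bool"
  assumes sg: "simple_graph V E" and cub: "cubic V E"
begin

abbreviation N where "N \<equiv> nbhd V E"

lemma finV: "finite V" using sg by (simp add: simple_graph_def)
lemma symE: "E x y \<Longrightarrow> E y x" using sg by (simp add: simple_graph_def)
lemma inV: "E x y \<Longrightarrow> x \<in> V \<and> y \<in> V" using sg by (simp add: simple_graph_def)
lemma irr: "\<not> E x x" using sg by (simp add: simple_graph_def)
lemma N_sub: "N w \<subseteq> V" by (auto simp: nbhd_def)
lemma mem_N: "u \<in> N w \<longleftrightarrow> E w u" using inV by (auto simp: nbhd_def)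
lemma mem_N': "u \<in> N w \<longleftrightarrow> w \<in> N u" using inV symE by (auto simp: nbhd_def)
lemma cardN: "w \<in> V \<Longrightarrow> card (N w) = 3" using cub by (simp add: cubic_def)
lemma N_empty: "w \<notin> V \<Longrightarrow> N w = {}" using inV by (auto simp: nbhd_def)
lemma finN: "finite (N w)" using finV N_sub finite_subset by blast
lemma N_ne: "w \<in> V \<Longrightarrow> N w \<noteq> {}" using cardN by fastforce

lemma legal_app:
  assumes "legal_seq V E S" "v \<in> N w" "N w \<inter> set S = {}"
  shows "legal_seq V E (S @ [v])"
proof -
  have vV: "v \<in> V" using assms(2) by (auto simp: nbhd_def)
  have vS: "v \<notin> set S" using assms(2,3) by auto
  have wN: "w \<in> N v" using assms(2) mem_N' by blast
  show ?thesis unfolding legal_seq_def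
  proof (intro conjI allI impI)
    show "distinct (S@[v])" using assms(1) vS by (auto simp: legal_seq_def)
    show "set (S@[v]) \<subseteq> V" using assms(1) vV by (auto simp: legal_seq_def)
    fix i assume i: "1 \<le> i \<and> i < length (S@[v])"
    show "N ((S@[v])!i) - (\<Union>j<i. N ((S@[v])!j)) \<noteq> {}"
    proof (cases "i < length S")
      case True
      then have "(S@[v])!i = S!i" "\<And>j. j<i \<Longrightarrow> (S@[v])!j = S!j" by (auto simp: nth_append)
      then have "(\<Union>j<i. N ((S@[v])!j)) = (\<Union>j<i. N (S!j))" by auto
      then show ?thesis using assms(1) i True \<open>(S@[v])!i = S!i\<close> unfolding legal_seq_def by auto
    next
      case False
      then have ii: "i = length S" using i by auto
      have "w \<notin> N ((S@[v])!j)" if "j < i" for j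
      proof
        assume "w \<in> N ((S@[v])!j)"
        then have "(S@[v])!j \<in> N w" using mem_N' by blast
        moreover have "(S@[v])!j = S!j" "S!j \<in> set S" using that ii by (auto simp: nth_append)
        ultimately show False using assms(3) by auto
      qed
      then have "w \<in> N ((S@[v])!i) - (\<Union>j<i. N ((S@[v])!j))" using wN ii by auto
      then show ?thesis by blast
    qed
  qed
qed

lemma legal_len: "legal_seq V E S \<Longrightarrow> length S \<le> card V"
proof -
  assume "legal_seq V E S"
  then have "distinct S" "set S \<subseteq> V" by (auto simp: legal_seq_def)
  then show ?thesis using finV card_mono distinct_card by metis
qed

lemma extend:
  assumes "legal_seq V E S"
  shows "\<exists>T. total_dom_seq V E T \<and> length S \<le> length T"
  using assms
proof (induction "card V - length S" arbitrary: S rule: less_induct)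
  case less
  show ?case
  proof (cases "total_dominating_set V E (set S)")
    case True then show ?thesis using less.prems by (auto simp: total_dom_seq_def)
  next
    case False
    then obtain v where v: "v \<in> V" "\<forall>u\<in>set S. \<not> E v u"
      using less.prems by (auto simp: total_dominating_set_def legal_seq_def)
    obtain u where u: "u \<in> N v" using N_ne[OF v(1)] by blast
    have "v \<in> N u" using u mem_N' by blast
    have "N v \<inter> set S = {}" using v(2) by (auto simp: mem_N)
    then have L: "legal_seq V E (S @ [u])" using legal_app less.prems u by blast
    have "card V - length (S@[u]) < card V - length S"
      using legal_len[OF L] by simp
    from less.hyps[OF this L] show ?thesis by auto
  qed
qed


definition closedU where "closedU U \<longleftrightarrow> (\<forall>w. N w \<inter> U \<noteq> {} \<longrightarrow> N w \<subseteq> U)"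
definition Str where "Str U \<longleftrightarrow> (\<forall>C. C \<subseteq> U \<longrightarrow> C \<noteq> {} \<longrightarrow> C \<noteq> U \<longrightarrow> (\<exists>w. N w \<inter> C \<noteq> {} \<and> N w \<inter> (U - C) \<noteq> {}))"
definition compat where "compat U S0 \<longleftrightarrow> (\<forall>w. N w \<inter> U \<noteq> {} \<longrightarrow> N w \<inter> set S0 = {})"
definition NT where "NT U \<longleftrightarrow> (\<forall>x\<in>U. \<forall>y\<in>U. x \<noteq> y \<longrightarrow> N x \<noteq> N y)"

lemma wV: "N w \<noteq> {} \<Longrightarrow> w \<in> V" using N_empty by blast

lemma PQ:
  assumes U: "U \<subseteq> V" and St: "Str U" and L0: "legal_seq V E S0" and cp: "compat U S0"
  shows "C \<subseteq> U \<Longrightarrow> C \<noteq> U \<Longrightarrow> \<exists>S. legal_seq V E S \<and> set S \<subseteq> set S0 \<union> C \<and> 2*length S0 + card C \<le> 2*length S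
     \<and> (NT U \<longrightarrow> C \<noteq> {} \<longrightarrow> 2*length S0 + card C + 1 \<le> 2*length S)"
proof (induction "card C" arbitrary: C rule: less_induct)
  case less
  have finC: "finite C" by (rule finite_subset[OF subset_trans[OF less.prems(1) U] finV])
  show ?case
  proof (cases "C = {}")
    case True then show ?thesis using L0 by (intro exI[of _ S0]) auto
  next
    case Cne: False
    show ?thesis
    proof (cases "NT U \<and> card C = 2")
      case True
      then obtain p q where pq: "C = {p,q}" "p \<noteq> q" by (meson card_2_iff)
      have "N p \<noteq> N q" using True pq less.prems(1) unfolding NT_def by auto
      have "\<exists>x y z. C = {x,y} \<and> x \<noteq> y \<and> z \<in> N x \<and> z \<notin> N y"
      proof (cases "N p \<subseteq> N q")
        case True then obtain z where "z \<in> N q" "z \<notin> N p" using \<open>N p \<noteq> N q\<close> by blast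
        then show ?thesis using pq by (intro exI[of _ q] exI[of _ p] exI[of _ z]) auto
      next
        case False then obtain z where "z \<in> N p" "z \<notin> N q" by blast
        then show ?thesis using pq by blast
      qed
      then obtain x y z where xyz: "C = {x,y}" "x \<noteq> y" "z \<in> N x" "z \<notin> N y" by blast
      have cy: "card {y} < card C" using True by simp
      have yU: "{y} \<subseteq> U" "{y} \<noteq> U" using less.prems xyz(1,2) by auto
      from less.hyps[OF cy yU] obtain S' where S': "legal_seq V E S'" "set S' \<subseteq> set S0 \<union> {y}"
        "NT U \<longrightarrow> {y} \<noteq> {} \<longrightarrow> 2*length S0 + card {y} + 1 \<le> 2*length S'" by blast
      have xz: "x \<in> N z" using xyz(3) by (rule mem_N'[THEN iffD1])
      have yz: "y \<notin> N z" using xyz(4) mem_N' by simp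
      have "N z \<inter> U \<noteq> {}" using xz less.prems xyz(1) by auto
      then have "N z \<inter> set S0 = {}" using cp unfolding compat_def by blast
      then have "N z \<inter> set S' = {}" using S'(2) yz by blast
      then have L: "legal_seq V E (S' @ [x])" using legal_app S'(1) xz by blast
      show ?thesis
        apply (rule exI[of _ "S' @ [x]"])
        using L S' True xyz(1) by auto
    next
      case False
      obtain w where w: "N w \<inter> C \<noteq> {}" "N w \<inter> (U - C) \<noteq> {}"
        using St Cne less.prems unfolding Str_def by blast
      obtain u where u: "u \<in> N w" "u \<in> U - C" using w(2) by blast
      have wv: "w \<in> V" using wV u(1) by blast
      have sub: "N w \<inter> C \<subseteq> N w - {u}" using u by blast
      have "card (N w - {u}) = 2" using cardN[OF wv] u(1) finN by simp
      then have c2: "card (N w \<inter> C) \<le> 2" using card_mono[OF _ sub] finN by (metis finite_Diff)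
      have c0: "card (N w \<inter> C) > 0" using w(1) finC by auto
      define C' where "C' = C - N w"
      have C'eq: "C' = C - (N w \<inter> C)" unfolding C'_def by blast
      have cC': "card C' = card C - card (N w \<inter> C)" unfolding C'eq
        using finC by (simp add: card_Diff_subset)
      have cle: "card (N w \<inter> C) \<le> card C" using finC by (simp add: card_mono)
      have lt: "card C' < card C" using cC' c0 cle by linarith
      have C'U: "C' \<subseteq> U" "C' \<noteq> U" using less.prems u unfolding C'_def by auto
      from less.hyps[OF lt C'U] obtain S' where S': "legal_seq V E S'" "set S' \<subseteq> set S0 \<union> C'"
        "2*length S0 + card C' \<le> 2*length S'"
        "NT U \<longrightarrow> C' \<noteq> {} \<longrightarrow> 2*length S0 + card C' + 1 \<le> 2*length S'" by blast
      obtain v where v: "v \<in> N w" "v \<in> C" using w(1) by blast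
      have "N w \<inter> U \<noteq> {}" using v less.prems by auto
      then have "N w \<inter> set S0 = {}" using cp unfolding compat_def by blast
      then have "N w \<inter> set S' = {}" using S'(2) unfolding C'_def by blast
      then have L: "legal_seq V E (S' @ [v])" using legal_app S'(1) v by blast
      have b1: "2*length S0 + card C \<le> 2*length (S' @ [v])" using S'(3) cC' c2 cle by simp
      have b2: "2*length S0 + card C + 1 \<le> 2*length (S' @ [v])" if "NT U"
      proof (cases "C' = {}")
        case False then show ?thesis using S'(4) that cC' c2 cle by simp
      next
        case True
        then have "card C = card (N w \<inter> C)" using cC' cle by simp
        then have "card C = 1" using c2 c0 False that by linarith
        then show ?thesis using S'(3) by simp
      qed
      show ?thesis
        apply (rule exI[of _ "S' @ [v]"])
        using L S'(2) b1 b2 v unfolding C'_def by auto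
    qed
  qed
qed


lemma conn_closed:
  assumes conn: "connected_graph V E" and W: "W \<subseteq> V" "W \<noteq> {}"
    and cl: "\<And>u v. u \<in> W \<Longrightarrow> E u v \<Longrightarrow> v \<in> W"
  shows "W = V"
proof -
  obtain w0 where w0: "w0 \<in> W" using W(2) by blast
  have "y \<in> W" if y: "y \<in> V" for y
  proof -
    have "E\<^sup>*\<^sup>* w0 y" using conn w0 W(1) y unfolding connected_graph_def by blast
    then show ?thesis
    proof (induction rule: rtranclp_induct)
      case base then show ?case by (rule w0)
    next
      case (step b c) then show ?case using cl by blast
    qed
  qed
  then show ?thesis using W(1) by blast
qed

lemma K33:
  assumes conn: "connected_graph V E" and x: "x \<in> V" and a: "a \<in> N x"
    and allb: "\<forall>b\<in>N x. N b = N a"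
  shows "graph_iso V E K33_V K33_E"
proof -
  define X where "X = N a"
  define Y where "Y = N x"
  have xX: "x \<in> X" unfolding X_def using a mem_N' by blast
  have hb: "\<And>b. b \<in> Y \<Longrightarrow> N b = X" using allb unfolding X_def Y_def by blast
  have cY: "card Y = 3" unfolding Y_def using cardN[OF x] .
  have hz: "N z = Y" if z: "z \<in> X" for z
  proof -
    have zV: "z \<in> V" using z N_sub unfolding X_def by blast
    have "Y \<subseteq> N z"
    proof
      fix b assume "b \<in> Y"
      then have "z \<in> N b" using hb z by blast
      then show "b \<in> N z" by (rule mem_N'[THEN iffD1])
    qed
    then show ?thesis using card_subset_eq[OF finN] cardN[OF zV] cY by metis
  qed
  have aV: "a \<in> V" using a N_sub by blast
  have cX: "card X = 3" unfolding X_def using cardN[OF aV] .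
  have disj: "X \<inter> Y = {}"
  proof (rule ccontr)
    assume "X \<inter> Y \<noteq> {}"
    then obtain z where "z \<in> X" "z \<in> Y" by blast
    then have "z \<in> N z" using hz by blast
    then have "E z z" by (simp add: mem_N)
    then show False using irr by blast
  qed
  have XYV: "X \<union> Y = V"
  proof (rule conn_closed[OF conn])
    show "X \<union> Y \<subseteq> V" unfolding X_def Y_def using N_sub by blast
    show "X \<union> Y \<noteq> {}" using xX by blast
    fix u v assume u: "u \<in> X \<union> Y" and uv: "E u v"
    have "v \<in> N u" using uv by (simp add: mem_N)
    then show "v \<in> X \<union> Y" using u hz hb by blast
  qed
  have finX: "finite X" "finite Y" unfolding X_def Y_def using finN by auto
  have "\<exists>h. bij_betw h X {0..<3::nat}"
    by (rule finite_same_card_bij) (simp_all add: finX cX)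
  then obtain gX where gX: "bij_betw gX X {0..<3::nat}" by blast
  have "\<exists>h. bij_betw h Y {0..<3::nat}"
    by (rule finite_same_card_bij) (simp_all add: finX cY)
  then obtain gY where gY: "bij_betw gY Y {0..<3::nat}" by blast
  define f where "f v = (if v \<in> X then (True, gX v) else (False, gY v))" for v
  have fK: "f v \<in> K33_V" if "v \<in> V" for v
  proof (cases "v \<in> X")
    case True then show ?thesis using bij_betw_apply[OF gX] unfolding f_def K33_V_def by auto
  next
    case False then have "v \<in> Y" using that XYV by blast
    then show ?thesis using False bij_betw_apply[OF gY] unfolding f_def K33_V_def by auto
  qed
  have inj: "inj_on f V"
  proof (rule inj_onI)
    fix u v assume u: "u \<in> V" and v: "v \<in> V" and e: "f u = f v"
    show "u = v"
    proof (cases "u \<in> X")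
      case True
      then have "v \<in> X" using e unfolding f_def by (auto split: if_splits)
      then show ?thesis using True e gX unfolding f_def bij_betw_def inj_on_def by auto
    next
      case False
      then have "v \<notin> X" using e unfolding f_def by (auto split: if_splits)
      then have "u \<in> Y" "v \<in> Y" using False u v XYV by auto
      then show ?thesis using False \<open>v \<notin> X\<close> e gY unfolding f_def bij_betw_def inj_on_def by auto
    qed
  qed
  have surj: "K33_V \<subseteq> f ` V"
  proof
    fix p assume p: "p \<in> K33_V"
    obtain bb k where pk: "p = (bb, k)" "k < 3" using p unfolding K33_V_def by auto
    show "p \<in> f ` V"
    proof (cases bb)
      case True
      have "k \<in> gX ` X" using gX pk(2) unfolding bij_betw_def by auto
      then obtain u where "u \<in> X" "gX u = k" by blast
      then show ?thesis using pk True XYV unfolding f_def by (intro image_eqI[of _ _ u]) auto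
    next
      case False
      have "k \<in> gY ` Y" using gY pk(2) unfolding bij_betw_def by auto
      then obtain u where "u \<in> Y" "gY u = k" by blast
      then have "u \<notin> X" using disj by blast
      then show ?thesis using pk False XYV \<open>u \<in> Y\<close> \<open>gY u = k\<close> unfolding f_def by (intro image_eqI[of _ _ u]) auto
    qed
  qed
  have bij: "bij_betw f V K33_V" unfolding bij_betw_def using inj surj fK by blast
  have edges: "E u v \<longleftrightarrow> K33_E (f u) (f v)" if u: "u \<in> V" and v: "v \<in> V" for u v
  proof -
    have "E u v \<longleftrightarrow> v \<in> N u" by (simp add: mem_N)
    also have "\<dots> \<longleftrightarrow> (u \<in> X \<longleftrightarrow> v \<notin> X)"
    proof (cases "u \<in> X")
      case True then show ?thesis using hz disj XYV v by auto
    next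
      case False then have "u \<in> Y" using u XYV by blast
      then show ?thesis using hb False by auto
    qed
    also have "\<dots> \<longleftrightarrow> K33_E (f u) (f v)" using fK u v unfolding K33_E_def f_def by auto
    finally show ?thesis .
  qed
  show ?thesis unfolding graph_iso_def using bij edges by blast
qed


lemma R:
  assumes conn: "connected_graph V E" and niso: "\<not> graph_iso V E K33_V K33_E"
    and U: "U \<subseteq> V" "U \<noteq> {}" and cl: "closedU U" and St: "Str U"
    and L0: "legal_seq V E S0" and cp: "compat U S0"
  shows "\<exists>S. legal_seq V E S \<and> set S \<subseteq> set S0 \<union> U \<and> 2*length S0 + card U \<le> 2*length S"
proof (cases "NT U")
  case False
  then obtain x y where xy: "x \<in> U" "y \<in> U" "x \<noteq> y" "N x = N y" unfolding NT_def by blast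
  have xV: "x \<in> V" using xy(1) U(1) by blast
  obtain a where a: "a \<in> N x" using N_ne[OF xV] by blast
  show ?thesis
  proof (cases "\<forall>b\<in>N x. N b = N a")
    case True then show ?thesis using K33[OF conn xV a] niso by blast
  next
    case False
    then obtain b where b: "b \<in> N x" "N b \<noteq> N a" by blast
    have aV: "a \<in> V" using a N_sub by blast
    have bV: "b \<in> V" using b N_sub by blast
    have xa: "x \<in> N a" using a by (rule mem_N'[THEN iffD1])
    have ay: "a \<in> N y" using a xy(4) by simp
    have ya: "y \<in> N a" using ay by (rule mem_N'[THEN iffD1])
    have xb: "x \<in> N b" using b(1) by (rule mem_N'[THEN iffD1])
    have by': "b \<in> N y" using b(1) xy(4) by simp
    have yb: "y \<in> N b" using by' by (rule mem_N'[THEN iffD1])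
    have "\<not> N b \<subseteq> N a"
    proof
      assume "N b \<subseteq> N a"
      then have "N b = N a" using card_subset_eq[OF finN] cardN[OF aV] cardN[OF bV] by metis
      then show False using b(2) by blast
    qed
    then obtain b' where b': "b' \<in> N b" "b' \<notin> N a" by blast
    have b'xy: "b' \<noteq> x" "b' \<noteq> y" using b'(2) xa ya by auto
    have c3: "card {x, y, b'} = 3" using b'xy xy(3) by auto
    have Nb: "N b = {x, y, b'}"
      using card_subset_eq[OF finN, of "{x,y,b'}" b] c3 cardN[OF bV] xb yb b'(1) by auto
    have NaU: "N a \<subseteq> U" using cl xa xy(1) unfolding closedU_def by blast
    have NbU: "N b \<subseteq> U" using cl xb xy(1) unfolding closedU_def by blast
    define C2 where "C2 = U - insert b' (N a)"
    have finU: "finite U" using U(1) finV finite_subset by blast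
    have c4: "card (insert b' (N a)) = 4" using b'(2) finN cardN[OF aV] by simp
    have sub4: "insert b' (N a) \<subseteq> U" using NaU NbU b'(1) by blast
    have cC2: "card C2 = card U - 4" unfolding C2_def using card_Diff_subset[OF _ sub4] finN c4 by simp
    have cU: "4 \<le> card U" using card_mono[OF finU sub4] c4 by simp
    have C2U: "C2 \<subseteq> U" "C2 \<noteq> U" unfolding C2_def using xa xy(1) by auto
    obtain S' where S': "legal_seq V E S'" "set S' \<subseteq> set S0 \<union> C2" "2*length S0 + card C2 \<le> 2*length S'"
      using PQ[OF U(1) St L0 cp C2U] by blast
    have "N b \<inter> U \<noteq> {}" using xb xy(1) by blast
    then have "N b \<inter> set S0 = {}" using cp unfolding compat_def by blast
    moreover have "N b \<inter> C2 = {}" unfolding C2_def using Nb xa ya by auto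
    ultimately have "N b \<inter> set S' = {}" using S'(2) by blast
    then have L1: "legal_seq V E (S' @ [b'])" using legal_app[OF S'(1) b'(1)] by blast
    have "N a \<inter> U \<noteq> {}" using xa xy(1) by blast
    then have "N a \<inter> set S0 = {}" using cp unfolding compat_def by blast
    moreover have "N a \<inter> C2 = {}" unfolding C2_def by auto
    ultimately have "N a \<inter> set (S' @ [b']) = {}" using S'(2) b'(2) by auto
    then have L2: "legal_seq V E ((S' @ [b']) @ [x])" using legal_app[OF L1 xa] by blast
    show ?thesis
    proof (intro exI conjI)
      show "legal_seq V E ((S' @ [b']) @ [x])" by (rule L2)
      show "set ((S' @ [b']) @ [x]) \<subseteq> set S0 \<union> U" using S'(2) C2U(1) b'(1) NbU xy(1) by auto
      show "2*length S0 + card U \<le> 2*length ((S' @ [b']) @ [x])" using S'(3) cC2 cU by simp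
    qed
  qed
next
  case True
  obtain u where u: "u \<in> U" using U(2) by blast
  have uV: "u \<in> V" using u U(1) by blast
  obtain w0 where w0: "w0 \<in> N u" using N_ne[OF uV] by blast
  have uw: "u \<in> N w0" using w0 by (rule mem_N'[THEN iffD1])
  have w0V: "w0 \<in> V" using w0 N_sub by blast
  have NU: "N w0 \<subseteq> U" using cl uw u unfolding closedU_def by blast
  have finU: "finite U" using U(1) finV finite_subset by blast
  define C1 where "C1 = U - N w0"
  have C1ne: "C1 \<noteq> {}"
  proof
    assume "C1 = {}"
    then have UN: "U = N w0" using NU unfolding C1_def by blast
    have cU3: "card U = 3" using UN cardN[OF w0V] by simp
    have sub: "N p \<subseteq> N q" if p: "p \<in> U" and q: "q \<in> U" for p q
    proof
      fix z assume z: "z \<in> N p"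
      have pz: "p \<in> N z" using z by (rule mem_N'[THEN iffD1])
      have zV: "z \<in> V" using z N_sub by blast
      have "N z \<subseteq> U" using cl pz p unfolding closedU_def by blast
      then have "N z = U" using card_subset_eq[OF finU] cU3 cardN[OF zV] by metis
      then have "q \<in> N z" using q by blast
      then show "z \<in> N q" by (rule mem_N'[THEN iffD1])
    qed
    have "card (U - {u}) = 2" using cU3 u finU by simp
    then have "U - {u} \<noteq> {}" by (metis card.empty zero_neq_numeral)
    then obtain y where y: "y \<in> U" "y \<noteq> u" by blast
    have "N u = N y" using sub[OF u y(1)] sub[OF y(1) u] by blast
    then show False using True y u unfolding NT_def by metis
  qed
  have C1U: "C1 \<subseteq> U" "C1 \<noteq> U" unfolding C1_def using uw u by auto
  obtain S' where S': "legal_seq V E S'" "set S' \<subseteq> set S0 \<union> C1"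
      "NT U \<longrightarrow> C1 \<noteq> {} \<longrightarrow> 2*length S0 + card C1 + 1 \<le> 2*length S'"
    using PQ[OF U(1) St L0 cp C1U] by blast
  have cC1: "card C1 = card U - 3" unfolding C1_def using card_Diff_subset[OF finN NU] cardN[OF w0V] by simp
  have cU: "3 \<le> card U" using card_mono[OF finU NU] cardN[OF w0V] by simp
  have "N w0 \<inter> U \<noteq> {}" using uw u by blast
  then have "N w0 \<inter> set S0 = {}" using cp unfolding compat_def by blast
  then have "N w0 \<inter> set S' = {}" using S'(2) unfolding C1_def by blast
  then have L: "legal_seq V E (S' @ [u])" using legal_app[OF S'(1) uw] by blast
  show ?thesis
  proof (intro exI conjI)
    show "legal_seq V E (S' @ [u])" by (rule L)
    show "set (S' @ [u]) \<subseteq> set S0 \<union> U" using S'(2) C1U(1) u by auto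
    show "2*length S0 + card U \<le> 2*length (S' @ [u])" using S'(3) True C1ne cC1 cU by simp
  qed
qed


definition bip where "bip C \<longleftrightarrow> C \<subseteq> V \<and> (\<forall>x y. E x y \<longrightarrow> (x \<in> C \<longleftrightarrow> y \<notin> C))"

lemma bip_compl: "bip C \<Longrightarrow> bip (V - C)"
  unfolding bip_def using inV by blast

lemma bip_closed: assumes "bip C" shows "closedU C"
  unfolding closedU_def
proof (intro allI impI)
  fix w assume "N w \<inter> C \<noteq> {}"
  then obtain z where "E w z" "z \<in> C" by (auto simp: mem_N)
  then have "w \<notin> C" using assms unfolding bip_def by blast
  then show "N w \<subseteq> C" using assms unfolding bip_def by (auto simp: mem_N)
qed

lemma bip_Str:
  assumes conn: "connected_graph V E" and b: "bip C"
  shows "Str C"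
  unfolding Str_def
proof (intro allI impI)
  fix C' assume C': "C' \<subseteq> C" "C' \<noteq> {}" "C' \<noteq> C"
  show "\<exists>w. N w \<inter> C' \<noteq> {} \<and> N w \<inter> (C - C') \<noteq> {}"
  proof (rule ccontr)
    assume no: "\<not> ?thesis"
    have CV: "C \<subseteq> V" and bE: "\<And>x y. E x y \<Longrightarrow> (x \<in> C \<longleftrightarrow> y \<notin> C)" using b unfolding bip_def by auto
    define X where "X = C' \<union> {w \<in> V. N w \<inter> C' \<noteq> {}}"
    have "X = V"
    proof (rule conn_closed[OF conn])
      show "X \<subseteq> V" unfolding X_def using C' CV by blast
      show "X \<noteq> {}" unfolding X_def using C' by blast
      fix u v assume u: "u \<in> X" and uv: "E u v"
      have vV: "v \<in> V" using uv inV by blast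
      show "v \<in> X"
      proof (cases "u \<in> C'")
        case True
        have "u \<in> N v" using uv symE by (simp add: mem_N)
        then show ?thesis using True vV unfolding X_def by blast
      next
        case False
        then have u2: "N u \<inter> C' \<noteq> {}" using u unfolding X_def by blast
        then obtain z where z: "z \<in> N u" "z \<in> C'" by blast
        have "E u z" using z(1) by (simp add: mem_N)
        then have "u \<notin> C" using bE z(2) C'(1) by blast
        then have "v \<in> C" using bE uv by blast
        moreover have "v \<in> N u" using uv by (simp add: mem_N)
        ultimately have "v \<in> C'" using no u2 by blast
        then show ?thesis unfolding X_def by blast
      qed
    qed
    obtain t where t: "t \<in> C" "t \<notin> C'" using C'(1,3) by blast
    then have "t \<in> X" using \<open>X = V\<close> CV by blast
    then have "N t \<inter> C' \<noteq> {}" using t(2) unfolding X_def by blast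
    then obtain z where z: "z \<in> N t" "z \<in> C'" by blast
    have "E t z" using z(1) by (simp add: mem_N)
    then show False using bE t(1) z(2) C'(1) by blast
  qed
qed

lemma bip_or_Str:
  assumes conn: "connected_graph V E"
  shows "Str V \<or> (\<exists>C. bip C \<and> C \<noteq> {} \<and> C \<noteq> V)"
proof (cases "Str V")
  case True then show ?thesis by blast
next
  case False
  then obtain C where C: "C \<subseteq> V" "C \<noteq> {}" "C \<noteq> V"
    and no: "\<And>w. N w \<inter> C = {} \<or> N w \<inter> (V - C) = {}" unfolding Str_def by blast
  have key: "u \<in> C \<longleftrightarrow> N w \<subseteq> C" if "E w u" for u w
  proof -
    have "u \<in> N w" using that by (simp add: mem_N)
    then show ?thesis using no[of w] N_sub[of w] by blast
  qed
  define W where "W = {v \<in> V. (v \<in> C \<longleftrightarrow> N v \<subseteq> C)}"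
  have pres: "(u \<in> C \<longleftrightarrow> N u \<subseteq> C) \<longleftrightarrow> (v \<in> C \<longleftrightarrow> N v \<subseteq> C)" if "E u v" for u v
    using key[OF that] key[OF symE[OF that]] by blast
  have "\<exists>C. bip C \<and> C \<noteq> {} \<and> C \<noteq> V"
  proof (cases "W = {}")
    case True
    have "bip C" unfolding bip_def
    proof (intro conjI allI impI)
      show "C \<subseteq> V" by (rule C(1))
      fix x y assume xy: "E x y"
      have "y \<notin> W" using True by blast
      then have "\<not> (y \<in> C \<longleftrightarrow> N y \<subseteq> C)" using xy inV unfolding W_def by blast
      then show "x \<in> C \<longleftrightarrow> y \<notin> C" using key[OF symE[OF xy]] by blast
    qed
    then show ?thesis using C by blast
  next
    case False
    have "W = V"
    proof (rule conn_closed[OF conn])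
      show "W \<subseteq> V" unfolding W_def by blast
      show "W \<noteq> {}" by (rule False)
      fix u v assume "u \<in> W" "E u v"
      then show "v \<in> W" using pres[of u v] inV unfolding W_def by blast
    qed
    have "C = V"
    proof (rule conn_closed[OF conn C(1) C(2)])
      fix u v assume u: "u \<in> C" and uv: "E u v"
      have "u \<in> W" using u C(1) \<open>W = V\<close> by blast
      then have "N u \<subseteq> C" using u unfolding W_def by blast
      moreover have "v \<in> N u" using uv by (simp add: mem_N)
      ultimately show "v \<in> C" by blast
    qed
    then show ?thesis using C(3) by blast
  qed
  then show ?thesis by blast
qed

lemma legal_nil: "legal_seq V E []" unfolding legal_seq_def by simp

lemma main_loc:
  assumes conn: "connected_graph V E" and niso: "\<not> graph_iso V E K33_V K33_E"
  shows "\<exists>S. legal_seq V E S \<and> card V \<le> 2*length S"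
proof -
  have Vne: "V \<noteq> {}" using conn unfolding connected_graph_def by blast
  from bip_or_Str[OF conn] show ?thesis
  proof
    assume St: "Str V"
    have "closedU V" unfolding closedU_def using N_sub by blast
    moreover have "compat V []" unfolding compat_def by simp
    ultimately show ?thesis using R[OF conn niso subset_refl Vne _ St legal_nil] by fastforce
  next
    assume "\<exists>C. bip C \<and> C \<noteq> {} \<and> C \<noteq> V"
    then obtain C where C: "bip C" "C \<noteq> {}" "C \<noteq> V" by blast
    have CV: "C \<subseteq> V" using C(1) unfolding bip_def by blast
    define D where "D = V - C"
    have bD: "bip D" unfolding D_def using bip_compl[OF C(1)] .
    have Dne: "D \<noteq> {}" using CV C(3) unfolding D_def by blast
    have DV: "D \<subseteq> V" unfolding D_def by blast
    have "compat D []" unfolding compat_def by simp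
    then obtain S1 where S1: "legal_seq V E S1" "set S1 \<subseteq> D" "card D \<le> 2*length S1"
      using R[OF conn niso DV Dne bip_closed[OF bD] bip_Str[OF conn bD] legal_nil] by auto
    have "compat C S1" unfolding compat_def
    proof (intro allI impI)
      fix w assume "N w \<inter> C \<noteq> {}"
      then have "N w \<subseteq> C" using bip_closed[OF C(1)] unfolding closedU_def by blast
      then show "N w \<inter> set S1 = {}" using S1(2) unfolding D_def by blast
    qed
    then obtain S where S: "legal_seq V E S" "2*length S1 + card C \<le> 2*length S"
      using R[OF conn niso CV C(2) bip_closed[OF C(1)] bip_Str[OF conn C(1)] S1(1)] by blast
    have "card V = card C + card D" unfolding D_def using CV finV
      by (metis card_Diff_subset card_mono le_add_diff_inverse finite_subset)
    then show ?thesis using S S1(3) by (intro exI[of _ S]) auto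
  qed
qed

end

theorem mainTheorem15:
  fixes V :: "'a set" and E :: "'a \<Rightarrow> 'a \<Rightarrow> bool"
  assumes "simple_graph V E"
    and "connected_graph V E"
    and "cubic V E"
    and "\<not> graph_iso V E K33_V K33_E"
  shows "2 * gamma_gr_t V E \<ge> card V"
proof -
  interpret cg V E using assms(1,3) by unfold_locales
  obtain S where S: "legal_seq V E S" "card V \<le> 2*length S" using main_loc[OF assms(2,4)] by blast
  obtain T where T: "total_dom_seq V E T" "length S \<le> length T" using extend[OF S(1)] by blast
  have fin: "finite (length ` {S. total_dom_seq V E S})"
  proof (rule finite_subset)
    show "length ` {S. total_dom_seq V E S} \<subseteq> {0..card V}"
      using legal_len unfolding total_dom_seq_def by auto
  qed simp
  have "length T \<le> gamma_gr_t V E" unfolding gamma_gr_t_def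
    using Max_ge[OF fin] T(1) by blast
  then show ?thesis using S(2) T(2) by linarith
qed

end
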